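(* Let $N>M>0$ be integers and consider the Lax function $$\mathcal{L}=p^{-M}\prod_{i=1}^{N}(p+u^i),$$ where $u^1,\dots,u^N$ are functions of $x$ and of the times $\tau_1,\tau_2,\dots$ (with $u^i\neq 0$). The hierarchy $$\frac{\partial \mathcal L}{\partial \tau_n}=\big\{(\mathcal L^{\frac{n}{N-M}})_+,\mathcal L\big\}_{PB},\qquad n=1,2,\dots,$$ is Hamiltonian with respect to the Poisson bracket of hydrodynamic type determined by the flat, non-degenerate contravariant metric $$g^{ij}(u)=\begin{cases}\big[1-(N-M)\big]\,u^iu^i, & i=j,\\ u^iu^j,& i\neq j,\end{cases}\qquad i,j=1,\dots,N,$$ with Hamiltonians given (up to a suitable nonzero normalisation constant for each $n$) by $H^{(n)}=\int Q^{(n)}\,dx$, where $$Q^{(n)}=\sum_{\{r_1,\dots,r_N\ge 0:\ \sum_i r_i=n\}}\ \prod_{i=1}^{N}\binom{\frac{n}{N-M}}{r_i}(u^i)^{r_i}$$ is the coefficient of $p^0$ in $\mathcal L^{\frac{n}{N-M}}$.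
   Context: $\{f,g\}_{PB}=p\,(\partial_pf\,\partial_xg-\partial_xf\,\partial_pg)$. The power $\mathcal L^{\frac{n}{N-M}}$ is expanded formally as a Laurent series in $p$ at $p=\infty$ (note $\mathcal L^{1/(N-M)}=p(1+O(p^{-1}))$), and $(\cdot)_+$ denotes the projection onto non-negative powers of $p$. Binomial coefficients with non-integer upper entry are $\binom{a}{b}=\frac{\Gamma(a+1)}{\Gamma(a-b+1)\Gamma(b+1)}$. The Poisson bracket of hydrodynamic type determined by a flat non-degenerate contravariant metric $g^{ij}$ is $\{u^i(x),u^j(y)\}=g^{ij}(u(x))\delta'(x-y)+\Gamma^{ij}_k(u(x))u^k_x\delta(x-y)$ with $\Gamma^{ij}_k=-g^{is}\Gamma^j_{sk}$, where $\Gamma^j_{sk}$ are the Christoffel symbols of the Levi-Civita connection of the metric $(g^{ij})^{-1}$; the Hamiltonian flow of a functional $H=\int h(u)\,dx$ is $u^i_\tau=\big(g^{ij}\frac{d}{dx}+\Gamma^{ij}_ku^k_x\big)\frac{\delta H}{\delta u^j}$ (summation over repeated indices). *)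

theory Defs
  imports "HOL-Analysis.Analysis" "HOL-Computational_Algebra.Formal_Power_Series"
begin

text \<open>Fields u = (u^1,...,u^N) are vectors in real^'N with N = CARD('N).
  M is the integer of the Lax function; alpha = n/(N-M).\<close>

definition alpha :: "nat \<Rightarrow> nat \<Rightarrow> nat \<Rightarrow> real" where
  "alpha N M n = real n / (real N - real M)"

definition Lax :: "nat \<Rightarrow> real^'N \<Rightarrow> real \<Rightarrow> real" where
  "Lax M u p = inverse (p ^ M) * (\<Prod>i\<in>UNIV. p + u $ i)"

text \<open>Formal expansion at p = infinity, in the variable q = 1/p:
  L = q^(-(N-M)) * prod_i (1 + u^i q), and L^(1/(N-M)) = p * R(1/p) where R is the
  unique formal power series with constant term 1 and R^(N-M) = prod_i (1 + u^i q).
  Hence L^(n/(N-M)) = p^n * R(1/p)^n, whose coefficient of p^(n-s) is the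
  s-th coefficient of R^n.\<close>
definition Lroot :: "nat \<Rightarrow> real^'N \<Rightarrow> real fps" where
  "Lroot M u = (THE R. fps_nth R 0 = 1 \<and>
      R ^ (CARD('N) - M) = (\<Prod>i\<in>UNIV. 1 + fps_const (u $ i) * fps_X))"

definition Lpow_coeff :: "nat \<Rightarrow> nat \<Rightarrow> nat \<Rightarrow> real^'N \<Rightarrow> real" where
  "Lpow_coeff M n s u = fps_nth ((Lroot M u) ^ n) s"

definition Lpow_plus :: "nat \<Rightarrow> nat \<Rightarrow> real^'N \<Rightarrow> real \<Rightarrow> real" where
  "Lpow_plus M n u p = (\<Sum>s=0..n. Lpow_coeff M n s u * p ^ (n - s))"

definition Qdens :: "nat \<Rightarrow> nat \<Rightarrow> real^'N \<Rightarrow> real" where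
  "Qdens M n u = (\<Sum>r\<in>{r::'N \<Rightarrow> nat. sum r UNIV = n}.
       \<Prod>i\<in>UNIV. (alpha CARD('N) M n gchoose (r i)) * (u $ i) ^ (r i))"

definition gup :: "nat \<Rightarrow> real^'N \<Rightarrow> real^'N^'N" where
  "gup M u = (\<chi> i j. if i = j then (1 - (real CARD('N) - real M)) * (u $ i) * (u $ i)
                        else (u $ i) * (u $ j))"

definition glow :: "nat \<Rightarrow> real^'N \<Rightarrow> real^'N^'N" where
  "glow M u = matrix_inv (gup M u)"

definition pd :: "(real^'N \<Rightarrow> real) \<Rightarrow> 'N \<Rightarrow> real^'N \<Rightarrow> real" where
  "pd f k u = deriv (\<lambda>t. f (u + t *\<^sub>R axis k 1)) 0"

text \<open>Christoffel symbols Gamma^j_{sk} of the Levi-Civita connection of glow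
  (using that gup is the inverse of glow).\<close>
definition Chr :: "nat \<Rightarrow> 'N \<Rightarrow> 'N \<Rightarrow> 'N \<Rightarrow> real^'N \<Rightarrow> real" where
  "Chr M j s k u = (1/2) * (\<Sum>l\<in>UNIV. (gup M u) $ j $ l *
      (pd (\<lambda>v. glow M v $ l $ k) s u + pd (\<lambda>v. glow M v $ l $ s) k u
       - pd (\<lambda>v. glow M v $ s $ k) l u))"

definition Chr_up :: "nat \<Rightarrow> 'N \<Rightarrow> 'N \<Rightarrow> 'N \<Rightarrow> real^'N \<Rightarrow> real" where
  "Chr_up M i j k u = - (\<Sum>s\<in>UNIV. (gup M u) $ i $ s * Chr M j s k u)"

definition Riem :: "nat \<Rightarrow> 'N \<Rightarrow> 'N \<Rightarrow> 'N \<Rightarrow> 'N \<Rightarrow> real^'N \<Rightarrow> real" where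
  "Riem M i j k l u = pd (Chr M i l j) k u - pd (Chr M i k j) l u
     + (\<Sum>m\<in>UNIV. Chr M i k m u * Chr M m l j u - Chr M i l m u * Chr M m k j u)"

text \<open>The n-th Lax equation dL/dtau = {(L^(n/(N-M)))_+, L}_PB at the point (x,tau),
  for u depending on (x, tau); identity of Laurent polynomials in p, i.e. for all p \<noteq> 0.\<close>
definition Lax_eq_at :: "nat \<Rightarrow> nat \<Rightarrow> (real \<Rightarrow> real \<Rightarrow> real^'N) \<Rightarrow> real \<Rightarrow> real \<Rightarrow> bool" where
  "Lax_eq_at M n u x tau \<longleftrightarrow> (\<forall>p. p \<noteq> 0 \<longrightarrow>
     deriv (\<lambda>t. Lax M (u x t) p) tau =
       p * (deriv (\<lambda>q. Lpow_plus M n (u x tau) q) p * deriv (\<lambda>y. Lax M (u y tau) p) x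
          - deriv (\<lambda>y. Lpow_plus M n (u y tau) p) x * deriv (\<lambda>q. Lax M (u x tau) q) p))"

text \<open>Hamiltonian flow u^i_tau = (g^{ij} d/dx + Gamma^{ij}_k u^k_x) deltaH/delta u^j at (x,tau),
  for H = int h(u) dx, so deltaH/delta u^j = dh/du^j.\<close>
definition Ham_eq_at :: "nat \<Rightarrow> (real^'N \<Rightarrow> real) \<Rightarrow> (real \<Rightarrow> real \<Rightarrow> real^'N) \<Rightarrow> real \<Rightarrow> real \<Rightarrow> bool" where
  "Ham_eq_at M h u x tau \<longleftrightarrow> (\<forall>i.
     deriv (\<lambda>t. u x t $ i) tau =
       (\<Sum>j\<in>UNIV. (gup M (u x tau)) $ i $ j * deriv (\<lambda>y. pd h j (u y tau)) x)
       + (\<Sum>j\<in>UNIV. \<Sum>k\<in>UNIV. Chr_up M i j k (u x tau) * deriv (\<lambda>y. u y tau $ k) x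
                                 * pd h j (u x tau)))"

end

theory Submission
  imports Defs
begin

notation fps_nth (infixl "$$" 75)

definition Bf :: "real \<Rightarrow> real \<Rightarrow> real fps" where
  "Bf a c = Abs_fps (\<lambda>r. (a gchoose r) * c ^ r)"

lemma Bf_nth[simp]: "Bf a c $$ r = (a gchoose r) * c ^ r"
  by (simp add: Bf_def)

lemma Bf_mult: "Bf a c * Bf b c = Bf (a + b) c"
proof (rule fps_ext)
  fix n
  have "(Bf a c * Bf b c) $$ n = (\<Sum>i=0..n. ((a gchoose i) * (b gchoose (n - i))) * c ^ n)"
    unfolding fps_mult_nth
    by (rule sum.cong) (auto simp: power_add[symmetric])
  also have "\<dots> = ((a + b) gchoose n) * c ^ n"
    by (simp add: sum_distrib_right[symmetric] gbinomial_Vandermonde)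
  finally show "(Bf a c * Bf b c) $$ n = Bf (a + b) c $$ n" by simp
qed

lemma Bf_0: "Bf 0 c = 1"
proof (rule fps_ext)
  fix n show "Bf 0 c $$ n = 1 $$ n" by (cases n) auto
qed

lemma gch1: "((1::real) gchoose r) = (if r \<le> 1 then 1 else 0)"
proof -
  have "((1::real) gchoose r) = of_nat (1 choose r)"
    using binomial_gbinomial[of 1 r, where 'a=real] by simp
  then show ?thesis by (cases r) (auto simp: binomial_eq_0)
qed

lemma Bf_1: "Bf 1 c = 1 + fps_const c * fps_X"
proof (rule fps_ext)
  fix n show "Bf 1 c $$ n = (1 + fps_const c * fps_X) $$ n"
    by (cases n) (auto simp: gch1)
qed

lemma Bf_pow: "Bf a c ^ m = Bf (of_nat m * a) c"
  by (induction m) (simp_all add: Bf_0 Bf_mult algebra_simps)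

lemma Bf_m1: "Bf (-1) c * (1 + fps_const c * fps_X) = 1"
  by (simp add: Bf_1[symmetric] Bf_mult Bf_0)

lemma gch_m1: "((-1::real) gchoose r) = (-1) ^ r"
proof -
  have "((-1::real) gchoose r) = (-1) ^ r * ((of_nat r) gchoose r)"
    using gbinomial_minus[of "1::real" r] by simp
  also have "((of_nat r::real) gchoose r) = of_nat (r choose r)"
    by (rule binomial_gbinomial[symmetric])
  finally show ?thesis by simp
qed

lemma gch_m2: "((-2::real) gchoose r) = (-1) ^ r * (of_nat r + 1)"
proof -
  have "((-2::real) gchoose r) = (-1) ^ r * ((of_nat (Suc r)) gchoose r)"
    using gbinomial_minus[of "2::real" r] by (simp add: add.commute)
  also have "((of_nat (Suc r)::real) gchoose r) = of_nat (Suc r choose r)"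
    by (rule binomial_gbinomial[symmetric])
  finally show ?thesis by simp
qed

lemma fps_deriv_Bf: "fps_deriv (Bf a c) = fps_const (a * c) * Bf (a - 1) c"
proof (rule fps_ext)
  fix n
  have "of_nat (Suc n) * (a gchoose Suc n) = a * ((a - 1) gchoose n)"
    by (rule gbinomial_absorption)
  then show "fps_deriv (Bf a c) $$ n = (fps_const (a * c) * Bf (a - 1) c) $$ n"
    by (simp add: algebra_simps)
qed

lemma fps_deriv_prod_gen:
  fixes f :: "'i \<Rightarrow> real fps"
  assumes "finite I"
  shows "fps_deriv (\<Prod>i\<in>I. f i) = (\<Sum>m\<in>I. fps_deriv (f m) * (\<Prod>i\<in>I - {m}. f i))"
  using assms
proof (induction I rule: finite_induct)
  case empty then show ?case by simp
next
  case (insert a I)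
  have e: "\<And>m. m \<in> I \<Longrightarrow> insert a I - {m} = insert a (I - {m})" using insert by auto
  have "fps_deriv (\<Prod>i\<in>insert a I. f i) = fps_deriv (f a) * (\<Prod>i\<in>I. f i) + f a * fps_deriv (\<Prod>i\<in>I. f i)"
    using insert by simp
  also have "\<dots> = fps_deriv (f a) * (\<Prod>i\<in>I. f i) + (\<Sum>m\<in>I. fps_deriv (f m) * (\<Prod>i\<in>insert a I - {m}. f i))"
    using insert by (simp add: sum_distrib_left e algebra_simps prod.insert_remove)
  also have "\<dots> = (\<Sum>m\<in>insert a I. fps_deriv (f m) * (\<Prod>i\<in>insert a I - {m}. f i))"
    using insert by (simp add: insert_Diff_if)
  finally show ?case .
qed

definition fhd :: "(real \<Rightarrow> real fps) \<Rightarrow> real fps \<Rightarrow> real \<Rightarrow> bool" where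
  "fhd f D x \<longleftrightarrow> (\<forall>s. ((\<lambda>y. f y $$ s) has_real_derivative D $$ s) (at x))"

lemma fhd_cong: "fhd f D x \<Longrightarrow> D = D' \<Longrightarrow> fhd f D' x" by simp

lemma fhd_const: "fhd (\<lambda>y. c) 0 x"
  by (simp add: fhd_def)

lemma fhd_mult:
  assumes "fhd f D x" "fhd g E x"
  shows "fhd (\<lambda>y. f y * g y) (D * g x + f x * E) x"
  unfolding fhd_def
proof
  fix s
  have "((\<lambda>y. \<Sum>i=0..s. f y $$ i * g y $$ (s - i)) has_real_derivative
         (\<Sum>i=0..s. D $$ i * g x $$ (s - i) + E $$ (s - i) * f x $$ i)) (at x)"
    using assms unfolding fhd_def by (intro DERIV_sum DERIV_mult) auto
  then show "((\<lambda>y. (f y * g y) $$ s) has_real_derivative (D * g x + f x * E) $$ s) (at x)"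
    by (simp only: fps_add_nth fps_mult_nth sum.distrib) (simp add: mult.commute)
qed

lemma fhd_prod:
  fixes f :: "'i \<Rightarrow> real \<Rightarrow> real fps"
  assumes "finite I" "\<And>i. i \<in> I \<Longrightarrow> fhd (f i) (D i) x"
  shows "fhd (\<lambda>y. \<Prod>i\<in>I. f i y) (\<Sum>m\<in>I. D m * (\<Prod>i\<in>I - {m}. f i x)) x"
  using assms
proof (induction I rule: finite_induct)
  case empty then show ?case by (simp add: fhd_def)
next
  case (insert a I)
  have e: "\<And>m. m \<in> I \<Longrightarrow> insert a I - {m} = insert a (I - {m})" using insert by auto
  have h: "fhd (\<lambda>y. f a y * (\<Prod>i\<in>I. f i y)) (D a * (\<Prod>i\<in>I. f i x) + f a x * (\<Sum>m\<in>I. D m * (\<Prod>i\<in>I - {m}. f i x))) x"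
    using insert by (intro fhd_mult) auto
  show ?case
  proof (rule fhd_cong)
    show "fhd (\<lambda>y. \<Prod>i\<in>insert a I. f i y) (D a * (\<Prod>i\<in>I. f i x) + f a x * (\<Sum>m\<in>I. D m * (\<Prod>i\<in>I - {m}. f i x))) x"
      using h insert by simp
    have "f a x * (\<Sum>m\<in>I. D m * (\<Prod>i\<in>I - {m}. f i x)) = (\<Sum>m\<in>I. D m * (\<Prod>i\<in>insert a I - {m}. f i x))"
      using insert by (simp add: sum_distrib_left e algebra_simps prod.insert_remove)
    then show "D a * (\<Prod>i\<in>I. f i x) + f a x * (\<Sum>m\<in>I. D m * (\<Prod>i\<in>I - {m}. f i x)) =
        (\<Sum>m\<in>insert a I. D m * (\<Prod>i\<in>insert a I - {m}. f i x))"
      using insert by (simp add: insert_Diff_if)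
  qed
qed

lemma fhd_Bf:
  assumes "(w has_real_derivative w') (at x)"
  shows "fhd (\<lambda>y. Bf a (w y)) (fps_const (a * w') * fps_X * Bf (a - 1) (w x)) x"
  unfolding fhd_def
proof
  fix r
  have d: "((\<lambda>y. (a gchoose r) * w y ^ r) has_real_derivative (a gchoose r) * (of_nat r * w x ^ (r - 1) * w')) (at x)"
    using DERIV_cmult[OF DERIV_power[OF assms, of r], of "a gchoose r"] by (simp add: algebra_simps)
  have "(a gchoose r) * (of_nat r * w x ^ (r - 1) * w') = (fps_const (a * w') * fps_X * Bf (a - 1) (w x)) $$ r"
  proof (cases r)
    case 0 then show ?thesis by simp
  next
    case (Suc k)
    have ab: "of_nat (Suc k) * (a gchoose Suc k) = a * ((a - 1) gchoose k)"
      by (rule gbinomial_absorption)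
    have r: "(fps_const (a * w') * fps_X * Bf (a - 1) (w x)) $$ Suc k = a * w' * (((a - 1) gchoose k) * w x ^ k)"
      by (simp add: mult.assoc)
    have "(a gchoose r) * (of_nat r * w x ^ (r - 1) * w') = (of_nat (Suc k) * (a gchoose Suc k)) * w x ^ k * w'"
      using Suc by (simp only: diff_Suc_1) (simp only: mult_ac)
    also have "\<dots> = a * w' * (((a - 1) gchoose k) * w x ^ k)"
      by (simp only: ab mult_ac)
    finally show ?thesis using r Suc by simp
  qed
  then show "((\<lambda>y. Bf a (w y) $$ r) has_real_derivative (fps_const (a * w') * fps_X * Bf (a - 1) (w x)) $$ r) (at x)"
    using d by simp
qed

definition Fv :: "real \<Rightarrow> real^'N \<Rightarrow> real fps" where
  "Fv a v = (\<Prod>i\<in>UNIV. Bf a (v $ i))"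

lemma fps_prod_nth0: "finite I \<Longrightarrow> (\<Prod>i\<in>I. f i) $$ 0 = (\<Prod>i\<in>I. f i $$ 0)"
  by (induction I rule: finite_induct) auto

lemma Fv_nth0: "Fv a v $$ 0 = 1"
  by (simp add: Fv_def fps_prod_nth0)

lemma Lroot_eq:
  assumes "M < CARD('N::finite)"
  shows "Lroot M (u::real^'N) = Fv (1 / (real CARD('N) - real M)) u"
proof -
  define k where "k = CARD('N) - M"
  have k0: "k > 0" using assms by (simp add: k_def)
  have kr: "real CARD('N) - real M = real k" using assms by (simp add: k_def of_nat_diff)
  define R where "R = Fv (1 / (real CARD('N) - real M)) u"
  have R0: "R $$ 0 = 1" by (simp add: R_def Fv_nth0)
  have Rk: "R ^ k = (\<Prod>i\<in>UNIV. 1 + fps_const (u $ i) * fps_X)"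
    using k0 by (simp add: R_def Fv_def prod_power_distrib Bf_pow kr Bf_1)
  have "Lroot M u = R"
    unfolding Lroot_def k_def[symmetric]
  proof (rule the_equality)
    show "R $$ 0 = 1 \<and> R ^ k = (\<Prod>i\<in>UNIV. 1 + fps_const (u $ i) * fps_X)"
      using R0 Rk by simp
    fix R' assume h: "R' $$ 0 = 1 \<and> R' ^ k = (\<Prod>i\<in>UNIV. 1 + fps_const (u $ i) * fps_X)"
    show "R' = R"
      by (rule fps_power_eqD[of R' k R]) (use h R0 Rk k0 in auto)
  qed
  then show ?thesis by (simp add: R_def)
qed

lemma Lpow_coeff_eq:
  assumes "M < CARD('N::finite)"
  shows "Lpow_coeff M n s (u::real^'N) = Fv (alpha CARD('N) M n) u $$ s"
proof -
  have "Lroot M u ^ n = Fv (alpha CARD('N) M n) u"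
    by (simp add: Lroot_eq[OF assms] Fv_def prod_power_distrib Bf_pow alpha_def)
  then show ?thesis by (simp add: Lpow_coeff_def)
qed

lemma Qdens_eq:
  "Qdens M n (u::real^'N::finite) = Fv (alpha CARD('N) M n) u $$ n"
proof -
  let ?a = "alpha CARD('N) M n"
  have bij: "bij_betw count (multisets_of_size (UNIV::'N set) n) {r::'N \<Rightarrow> nat. sum r UNIV = n}"
  proof (rule bij_betwI')
    fix X Y :: "'N multiset"
    show "(count X = count Y) = (X = Y)" by (rule count_inject)
  next
    fix X :: "'N multiset" assume "X \<in> multisets_of_size UNIV n"
    then have "size X = n" by (simp add: multisets_of_size_def)
    moreover have "size X = sum (count X) UNIV"
      unfolding size_multiset_overloaded_eq
      by (rule sum.mono_neutral_left) (auto simp: not_in_iff)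
    ultimately show "count X \<in> {r. sum r UNIV = n}" by simp
  next
    fix r :: "'N \<Rightarrow> nat" assume r: "r \<in> {r. sum r UNIV = n}"
    have c: "count (Abs_multiset r) = r" by (rule count_Abs_multiset) simp
    have "size (Abs_multiset r) = sum (count (Abs_multiset r)) UNIV"
      unfolding size_multiset_overloaded_eq
      by (rule sum.mono_neutral_left) (auto simp: not_in_iff)
    then have "Abs_multiset r \<in> multisets_of_size UNIV n"
      using r c by (simp add: multisets_of_size_def)
    then show "\<exists>X\<in>multisets_of_size UNIV n. r = count X" using c by metis
  qed
  have "Fv ?a u $$ n = (\<Sum>X\<in>multisets_of_size UNIV n. \<Prod>i\<in>UNIV. Bf ?a (u $ i) $$ count X i)"
    unfolding Fv_def by (rule fps_prod_nth') simp
  also have "\<dots> = (\<Sum>r\<in>{r::'N \<Rightarrow> nat. sum r UNIV = n}. \<Prod>i\<in>UNIV. Bf ?a (u $ i) $$ r i)"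
    by (rule sum.reindex_bij_betw[OF bij])
  finally show ?thesis by (simp add: Qdens_def)
qed

definition Ginv :: "nat \<Rightarrow> real^'N \<Rightarrow> real^'N^'N" where
  "Ginv M u = (\<chi> i j. (1 / ((real CARD('N) - real M) * real M)
       - (if i = j then 1 / (real CARD('N) - real M) else 0)) / (u $ i * u $ j))"

lemma gup_nth: "gup M (u::real^'N)  $ i $ j = u $ i * u $ j * (if i = j then 1 - (real CARD('N) - real M) else 1)"
  by (simp add: gup_def)

lemma Ginv_nth: "Ginv M (u::real^'N)  $ i $ j = (1 / ((real CARD('N) - real M) * real M)
       - (if i = j then 1 / (real CARD('N) - real M) else 0)) / (u $ i * u $ j)"
  by (simp add: Ginv_def)

lemma gup_Ginv:
  fixes u :: "real^'N"
  assumes M0: "0 < M" and MN: "M < CARD('N)" and nz: "\<forall>i. u $ i \<noteq> 0"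
  shows "gup M u ** Ginv M u = mat 1"
proof -
  define k where "k = real CARD('N) - real M"
  have k0: "k > 0" using MN by (simp add: k_def)
  define c where "c = 1 / (k * real M)"
  define d where "d = 1 / k"
  have cd: "c * (real CARD('N) - k) = d" using M0 k0 by (simp add: c_def d_def k_def)
  { fix i j :: 'N
    have t: "\<And>l. gup M u $ i $ l * Ginv M u $ l $ j =
        (u $ i / u $ j) * ((if i = l then 1 - k else 1) * c - (if l = j then (if i = j then 1 - k else 1) * d else 0))"
      using nz unfolding gup_nth Ginv_nth k_def[symmetric] c_def[symmetric] d_def[symmetric]
      by (auto simp: field_simps)
    have s1: "(\<Sum>l\<in>UNIV. (if i = l then 1 - k else 1) * c) = c * (real CARD('N) - k)"
    proof -
      have "(\<Sum>l\<in>UNIV. (if i = l then 1 - k else 1) * c) = (\<Sum>l\<in>UNIV. c - (if i = l then k * c else 0))"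
        by (rule sum.cong) (auto simp: algebra_simps)
      also have "\<dots> = c * real CARD('N) - k * c"
        by (simp add: sum_subtractf)
      finally show ?thesis by (simp add: algebra_simps)
    qed
    have "(gup M u ** Ginv M u) $ i $ j = (\<Sum>l\<in>UNIV. (u $ i / u $ j) * ((if i = l then 1 - k else 1) * c - (if l = j then (if i = j then 1 - k else 1) * d else 0)))"
      unfolding matrix_matrix_mult_def using t by simp
    also have "\<dots> = (u $ i / u $ j) * ((\<Sum>l\<in>UNIV. (if i = l then 1 - k else 1) * c) - (\<Sum>l\<in>UNIV. (if l = j then (if i = j then 1 - k else 1) * d else 0)))"
      by (simp only: sum_distrib_left[symmetric] sum_subtractf)
    also have "\<dots> = (u $ i / u $ j) * (c * (real CARD('N) - k) - (if i = j then 1 - k else 1) * d)"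
      by (simp only: s1 sum.delta' finite_UNIV) simp
    also have "\<dots> = mat 1 $ i $ j"
      using nz k0 by (auto simp: cd mat_def d_def field_simps)
    finally have "(gup M u ** Ginv M u) $ i $ j = mat 1 $ i $ j" . }
  then show ?thesis by (simp add: vec_eq_iff)
qed

lemma glow_eq:
  fixes u :: "real^'N"
  assumes M0: "0 < M" and MN: "M < CARD('N)" and nz: "\<forall>i. u $ i \<noteq> 0"
  shows "glow M u = Ginv M u" and "det (gup M u) \<noteq> 0" and "gup M u ** glow M u = mat 1"
proof -
  have r: "gup M u ** Ginv M u = mat 1" by (rule gup_Ginv[OF assms])
  then have l: "Ginv M u ** gup M u = mat 1" by (simp add: matrix_left_right_inverse)
  have "invertible (gup M u)" unfolding invertible_def using r l by blast
  then show "det (gup M u) \<noteq> 0" by (simp add: invertible_det_nz)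
  have ex: "\<exists>A'. gup M u ** A' = mat 1 \<and> A' ** gup M u = mat 1" using r l by blast
  have uniq: "A' = Ginv M u" if "gup M u ** A' = mat 1 \<and> A' ** gup M u = mat 1" for A'
  proof -
    have "A' = A' ** (gup M u ** Ginv M u)" using r by simp
    also have "\<dots> = (A' ** gup M u) ** Ginv M u" by (simp add: matrix_mul_assoc)
    also have "\<dots> = Ginv M u" using that by simp
    finally show ?thesis .
  qed
  show g: "glow M u = Ginv M u"
    unfolding glow_def matrix_inv_def by (rule uniq, rule someI_ex[OF ex])
  show "gup M u ** glow M u = mat 1" using g r by simp
qed

lemma path_nth: "(v + t *\<^sub>R axis s 1) $ i = v $ i + (if i = s then t else 0)"
  by (simp add: axis_def)

lemma pd_local:
  assumes "open S" "0 \<in> S" "\<And>t. t \<in> S \<Longrightarrow> f (v + t *\<^sub>R axis s 1) = g t"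
    and "(g has_real_derivative D) (at 0)"
  shows "pd f s v = D"
proof -
  have "((\<lambda>t. f (v + t *\<^sub>R axis s 1)) has_real_derivative D) (at 0)"
    by (rule has_field_derivative_transform_within_open[OF assms(4,1,2)]) (simp add: assms(3))
  then show ?thesis unfolding pd_def by (rule DERIV_imp_deriv)
qed

lemma openS: "open {t::real. c + t \<noteq> 0}"
proof -
  have "{t::real. c + t \<noteq> 0} = - {-c}" by auto
  then show ?thesis by (simp add: open_Compl)
qed

lemma pd_glow:
  fixes v :: "real^'N"
  assumes M0: "0 < M" and MN: "M < CARD('N)" and nz: "\<forall>i. v $ i \<noteq> 0"
  shows "pd (\<lambda>w. glow M w $ l $ k) s v =
     - ((if l = s then 1 / v $ l else 0) + (if k = s then 1 / v $ k else 0)) * glow M v $ l $ k"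
proof -
  define C where "C = (1 / ((real CARD('N) - real M) * real M)
       - (if l = k then 1 / (real CARD('N) - real M) else 0))"
  define a where "a = (\<lambda>t. v $ l + (if l = s then t else 0))"
  define b where "b = (\<lambda>t. v $ k + (if k = s then t else 0))"
  let ?S = "{t::real. v $ s + t \<noteq> 0}"
  have eq: "glow M (v + t *\<^sub>R axis s 1) $ l $ k = C / (a t * b t)" if "t \<in> ?S" for t
  proof -
    have "\<forall>i. (v + t *\<^sub>R axis s 1) $ i \<noteq> 0" using that nz by (auto simp: axis_def)
    then show ?thesis
      by (simp add: glow_eq(1)[OF M0 MN] Ginv_nth axis_def C_def a_def b_def)
  qed
  have da: "(a has_real_derivative (if l = s then 1 else 0)) (at 0)"
    unfolding a_def by (cases "l = s") (auto intro!: derivative_eq_intros)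
  have db: "(b has_real_derivative (if k = s then 1 else 0)) (at 0)"
    unfolding b_def by (cases "k = s") (auto intro!: derivative_eq_intros)
  have a0: "a 0 = v $ l" and b0: "b 0 = v $ k" by (simp_all add: a_def b_def)
  have ab0: "a 0 * b 0 \<noteq> 0" using nz a0 b0 by simp
  have dd: "((\<lambda>t. C / (a t * b t)) has_real_derivative
      - C * ((if l = s then 1 else 0) * b 0 + a 0 * (if k = s then 1 else 0)) / (a 0 * b 0)^2) (at 0)"
    using da db ab0 by (auto intro!: derivative_eq_intros simp: power2_eq_square field_simps)
  have "pd (\<lambda>w. glow M w $ l $ k) s v = - C * ((if l = s then 1 else 0) * b 0 + a 0 * (if k = s then 1 else 0)) / (a 0 * b 0)^2"
    by (rule pd_local[OF openS, of "v $ s"]) (use nz eq dd in auto)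
  also have "\<dots> = - ((if l = s then 1 / v $ l else 0) + (if k = s then 1 / v $ k else 0)) * glow M v $ l $ k"
  proof -
    have gv: "glow M v $ l $ k = C / (v $ l * v $ k)"
      by (simp add: glow_eq(1)[OF M0 MN nz] Ginv_nth C_def)
    have vl: "v $ l \<noteq> 0" and vk: "v $ k \<noteq> 0" using nz by auto
    show ?thesis unfolding gv a0 b0
      using vl vk by (cases "l = s"; cases "k = s") (simp_all add: power2_eq_square field_simps)
  qed
  finally show ?thesis .
qed

lemma glow_sym:
  fixes v :: "real^'N"
  assumes M0: "0 < M" and MN: "M < CARD('N)" and nz: "\<forall>i. v $ i \<noteq> 0"
  shows "glow M v $ l $ k = glow M v $ k $ l"
  by (simp add: glow_eq(1)[OF assms] Ginv_nth mult.commute eq_commute)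

lemma Chr_eq:
  fixes v :: "real^'N"
  assumes M0: "0 < M" and MN: "M < CARD('N)" and nz: "\<forall>i. v $ i \<noteq> 0"
  shows "Chr M j s k v = (if j = s \<and> s = k then - 1 / v $ j else 0)"
proof -
  have L: "pd (\<lambda>w. glow M w $ l $ k) s v + pd (\<lambda>w. glow M w $ l $ s) k v - pd (\<lambda>w. glow M w $ s $ k) l v
      = - 2 * (if s = k then glow M v $ l $ s / v $ s else 0)" for l
    unfolding pd_glow[OF assms]
    using glow_sym[OF assms, of l k] glow_sym[OF assms, of l s] glow_sym[OF assms, of s k]
    by (cases "l = s"; cases "l = k"; cases "s = k") (simp_all add: field_simps)
  have "Chr M j s k v = (\<Sum>l\<in>UNIV. gup M v $ j $ l * glow M v $ l $ s) * (if s = k then - 1 / v $ s else 0)"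
    unfolding Chr_def L sum_distrib_left sum_distrib_right
    by (rule sum.cong) (auto simp: field_simps)
  also have "\<dots> = (if j = s \<and> s = k then - 1 / v $ j else 0)"
    using glow_eq(3)[OF assms] unfolding matrix_matrix_mult_def
    by (auto simp: vec_eq_iff mat_def)
  finally show ?thesis .
qed

lemma pd_Chr:
  fixes v :: "real^'N"
  assumes M0: "0 < M" and MN: "M < CARD('N)" and nz: "\<forall>i. v $ i \<noteq> 0"
  shows "pd (Chr M i l j) k v = (if i = l \<and> l = j \<and> i = k then 1 / (v $ i)^2 else 0)"
proof (rule pd_local[OF openS, of "v $ k"])
  show "0 \<in> {t. v $ k + t \<noteq> 0}" using nz by simp
  let ?g = "\<lambda>t. if i = l \<and> l = j then - 1 / (v $ i + (if i = k then t else 0)) else 0"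
  show "Chr M i l j (v + t *\<^sub>R axis k 1) = ?g t" if "t \<in> {t. v $ k + t \<noteq> 0}" for t
  proof -
    have "\<forall>i. (v + t *\<^sub>R axis k 1) $ i \<noteq> 0" using that nz by (auto simp: axis_def)
    then show ?thesis by (simp add: Chr_eq[OF M0 MN] axis_def)
  qed
  show "(?g has_real_derivative (if i = l \<and> l = j \<and> i = k then 1 / (v $ i)^2 else 0)) (at 0)"
    using nz by (cases "i = l \<and> l = j"; cases "i = k") (auto intro!: derivative_eq_intros simp: power2_eq_square)
qed

lemma Riem_zero:
  fixes v :: "real^'N"
  assumes M0: "0 < M" and MN: "M < CARD('N)" and nz: "\<forall>i. v $ i \<noteq> 0"
  shows "Riem M i j k l v = 0"
proof -
  have s1: "(\<Sum>m\<in>UNIV. Chr M i k m v * Chr M m l j v) = (if i = k \<and> k = l \<and> l = j then 1 / (v $ i)^2 else 0)"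
  proof -
    have "(\<Sum>m\<in>UNIV. Chr M i k m v * Chr M m l j v) = (\<Sum>m\<in>UNIV. if m = k then (if i = k \<and> k = l \<and> l = j then 1 / (v $ i)^2 else 0) else 0)"
      unfolding Chr_eq[OF assms] by (rule sum.cong) (auto simp: power2_eq_square)
    then show ?thesis by simp
  qed
  have s2: "(\<Sum>m\<in>UNIV. Chr M i l m v * Chr M m k j v) = (if i = l \<and> l = k \<and> k = j then 1 / (v $ i)^2 else 0)"
  proof -
    have "(\<Sum>m\<in>UNIV. Chr M i l m v * Chr M m k j v) = (\<Sum>m\<in>UNIV. if m = l then (if i = l \<and> l = k \<and> k = j then 1 / (v $ i)^2 else 0) else 0)"
      unfolding Chr_eq[OF assms] by (rule sum.cong) (auto simp: power2_eq_square)
    then show ?thesis by simp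
  qed
  show ?thesis
    unfolding Riem_def pd_Chr[OF assms] sum_subtractf s1 s2
  proof -
    have c1: "(i = l \<and> l = j \<and> i = k) = (i = k \<and> k = j \<and> i = l)" by blast
    have c2: "(i = k \<and> k = l \<and> l = j) = (i = l \<and> l = k \<and> k = j)" by blast
    show "(if i = l \<and> l = j \<and> i = k then 1 / (v $ i)\<^sup>2 else 0) - (if i = k \<and> k = j \<and> i = l then 1 / (v $ i)\<^sup>2 else 0) +
    ((if i = k \<and> k = l \<and> l = j then 1 / (v $ i)\<^sup>2 else 0) - (if i = l \<and> l = k \<and> k = j then 1 / (v $ i)\<^sup>2 else 0)) = 0"
      by (simp only: c1 c2)
  qed
qed

definition ev :: "nat \<Rightarrow> real fps \<Rightarrow> real \<Rightarrow> real" where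
  "ev d g p = (\<Sum>s<d. g $$ s * p ^ (d - 1 - s))"

lemma ev_Suc: "ev (Suc d) h p = p * ev d h p + h $$ d"
proof -
  have "ev (Suc d) h p = (\<Sum>s<d. h $$ s * p ^ (d - s)) + h $$ d"
    by (simp add: ev_def)
  also have "(\<Sum>s<d. h $$ s * p ^ (d - s)) = p * ev d h p"
    unfolding ev_def sum_distrib_left
    by (rule sum.cong) (auto simp: Suc_diff_Suc power_Suc[symmetric] simp del: power_Suc)
  finally show ?thesis .
qed

lemma ev_X: "ev (Suc d) (fps_X * h) p = ev d h p"
proof -
  have "ev (Suc d) (fps_X * h) p = (\<Sum>s<Suc d. (fps_X * h) $$ s * p ^ (d - s))"
    by (simp add: ev_def)
  also have "\<dots> = (fps_X * h) $$ 0 * p ^ (d - 0) + (\<Sum>s<d. (fps_X * h) $$ Suc s * p ^ (d - Suc s))"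
    by (rule sum.lessThan_Suc_shift)
  also have "\<dots> = ev d h p"
    by (simp add: ev_def)
  finally show ?thesis .
qed

lemma ev_add: "ev d (f + g) p = ev d f p + ev d g p"
  by (simp add: ev_def sum.distrib algebra_simps)

lemma ev_diff: "ev d (f - g) p = ev d f p - ev d g p"
  by (simp add: ev_def sum_subtractf algebra_simps)

lemma ev_cmult: "ev d (fps_const c * f) p = c * ev d f p"
  by (simp add: ev_def sum_distrib_left algebra_simps)

lemma ev_sum: "ev d (\<Sum>m\<in>I. f m) p = (\<Sum>m\<in>I. ev d (f m) p)"
  unfolding ev_def fps_sum_nth sum_distrib_right by (rule sum.swap)

lemma ev_zero: "ev d 0 p = 0"
  by (simp add: ev_def)

lemma ev_div: "ev (Suc d) (h * (1 + fps_const c * fps_X)) p = (p + c) * ev d h p + h $$ d"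
proof -
  have "h * (1 + fps_const c * fps_X) = h + fps_const c * (fps_X * h)"
    by (simp add: algebra_simps)
  then have "ev (Suc d) (h * (1 + fps_const c * fps_X)) p = ev (Suc d) h p + c * ev d h p"
    by (simp add: ev_add ev_cmult ev_X)
  then show ?thesis by (simp add: ev_Suc algebra_simps)
qed

lemma Bm1_eq: "Bf (-1) c = 1 - fps_const c * fps_X * Bf (-1) c"
proof -
  have "Bf (-1) c * (1 + fps_const c * fps_X) = 1" by (rule Bf_m1)
  then show ?thesis by (simp add: algebra_simps)
qed

lemma Fv_split: "Fv a v = Bf a (v $ m) * (\<Prod>i\<in>UNIV - {m}. Bf a (v $ i))"
  unfolding Fv_def by (rule prod.remove) auto

lemma Bf_am1: "Bf (a - 1) c = Bf a c * Bf (-1) c"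
  by (simp add: Bf_mult)

lemma Fv_euler:
  "fps_X * fps_deriv (Fv a v) = fps_const a * fps_X * Fv a v * (\<Sum>m\<in>UNIV. fps_const (v $ m) * Bf (-1) (v $ m))"
proof -
  have "fps_deriv (Fv a v) = (\<Sum>m\<in>UNIV. fps_const (a * v $ m) * Bf (a - 1) (v $ m) * (\<Prod>i\<in>UNIV - {m}. Bf a (v $ i)))"
    unfolding Fv_def by (simp add: fps_deriv_prod_gen fps_deriv_Bf)
  also have "\<dots> = (\<Sum>m\<in>UNIV. fps_const a * Fv a v * (fps_const (v $ m) * Bf (-1) (v $ m)))"
  proof (rule sum.cong)
    fix m :: 'a
    show "fps_const (a * v $ m) * Bf (a - 1) (v $ m) * (\<Prod>i\<in>UNIV - {m}. Bf a (v $ i)) =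
          fps_const a * Fv a v * (fps_const (v $ m) * Bf (-1) (v $ m))"
      unfolding Fv_split[of a v m] Bf_am1 by (simp add: fps_const_mult[symmetric] del: fps_const_mult)
  qed simp
  finally show ?thesis by (simp add: sum_distrib_left algebra_simps)
qed

lemma Fv_fhd:
  fixes w :: "real \<Rightarrow> real^'N"
  assumes "\<And>i. ((\<lambda>y. w y $ i) has_real_derivative w' i) (at x)"
  shows "fhd (\<lambda>y. Fv a (w y)) (fps_const a * fps_X * Fv a (w x) * (\<Sum>m\<in>UNIV. fps_const (w' m) * Bf (-1) (w x $ m))) x"
proof -
  have "fhd (\<lambda>y. \<Prod>i\<in>UNIV. Bf a (w y $ i))
     (\<Sum>m\<in>UNIV. (fps_const (a * w' m) * fps_X * Bf (a - 1) (w x $ m)) * (\<Prod>i\<in>UNIV - {m}. Bf a (w x $ i))) x"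
    by (rule fhd_prod) (auto intro: fhd_Bf assms)
  moreover have "(\<Sum>m\<in>UNIV. (fps_const (a * w' m) * fps_X * Bf (a - 1) (w x $ m)) * (\<Prod>i\<in>UNIV - {m}. Bf a (w x $ i)))
      = (\<Sum>m\<in>UNIV. fps_const a * fps_X * Fv a (w x) * (fps_const (w' m) * Bf (-1) (w x $ m)))"
  proof (rule sum.cong)
    fix m :: 'N
    show "(fps_const (a * w' m) * fps_X * Bf (a - 1) (w x $ m)) * (\<Prod>i\<in>UNIV - {m}. Bf a (w x $ i)) =
          fps_const a * fps_X * Fv a (w x) * (fps_const (w' m) * Bf (-1) (w x $ m))"
      unfolding Fv_split[of a "w x" m] Bf_am1 by (simp add: fps_const_mult[symmetric] del: fps_const_mult)
  qed simp
  ultimately show ?thesis unfolding Fv_def sum_distrib_left[symmetric] by simp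
qed

lemma Y_zero:
  fixes v :: "real^'N" and ux :: "'N \<Rightarrow> real"
  assumes ka: "k * a = real n"
  defines "F \<equiv> Fv a v"
  defines "g \<equiv> fps_const (real n) * F - fps_X * fps_deriv F"
  defines "S1 \<equiv> (\<Sum>m\<in>UNIV. fps_const (v $ m) * Bf (-1) (v $ m))"
  defines "S2 \<equiv> (\<Sum>m\<in>UNIV. fps_const (ux m) * Bf (-1) (v $ m))"
  defines "H \<equiv> fps_const a * F * S2"
  shows "(\<Sum>m\<in>UNIV. fps_const (ux m) * g - fps_const (ux m * v $ m) * (fps_X * (g * Bf (-1) (v $ m)))
          + fps_const (v $ m) * (fps_X * H * Bf (-1) (v $ m))) - fps_const k * H = 0"
proof -
  have t: "fps_const (ux m) * g - fps_const (ux m * v $ m) * (fps_X * (g * Bf (-1) (v $ m)))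
          + fps_const (v $ m) * (fps_X * H * Bf (-1) (v $ m))
        = g * (fps_const (ux m) * Bf (-1) (v $ m)) + fps_X * H * (fps_const (v $ m) * Bf (-1) (v $ m))" for m
  proof -
    have "fps_const (ux m) * g - fps_const (ux m * v $ m) * (fps_X * (g * Bf (-1) (v $ m)))
        = g * fps_const (ux m) * (1 - fps_const (v $ m) * fps_X * Bf (-1) (v $ m))"
      by (simp add: fps_const_mult[symmetric] del: fps_const_mult) (simp add: algebra_simps)
    also have "\<dots> = g * (fps_const (ux m) * Bf (-1) (v $ m))"
    proof -
      have "1 - fps_const (v $ m) * fps_X * Bf (-1) (v $ m) = Bf (-1) (v $ m)"
        using Bm1_eq[of "v $ m"] by simp
      then show ?thesis by (simp only: mult.assoc)
    qed
    finally show ?thesis by simp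
  qed
  have e: "fps_X * fps_deriv F = fps_const a * fps_X * F * S1"
    unfolding F_def S1_def by (rule Fv_euler)
  have "(\<Sum>m\<in>UNIV. fps_const (ux m) * g - fps_const (ux m * v $ m) * (fps_X * (g * Bf (-1) (v $ m)))
          + fps_const (v $ m) * (fps_X * H * Bf (-1) (v $ m))) = g * S2 + fps_X * H * S1"
    unfolding t sum.distrib S1_def S2_def sum_distrib_left by simp
  also have "\<dots> = fps_const (real n) * F * S2"
    unfolding g_def e H_def by (simp add: algebra_simps)
  also have "\<dots> = fps_const k * H"
    unfolding H_def ka[symmetric] by (simp add: fps_const_mult[symmetric] del: fps_const_mult)
  finally show ?thesis by simp
qed

lemma KL:
  fixes v :: "real^'N" and ux :: "'N \<Rightarrow> real"
  assumes n1: "1 \<le> n" and ka: "k * a = real n" and p0: "p \<noteq> 0"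
    and kdef: "k = real CARD('N) - real M"
  defines "F \<equiv> Fv a v"
  defines "g \<equiv> fps_const (real n) * F - fps_X * fps_deriv F"
  defines "S2 \<equiv> (\<Sum>m\<in>UNIV. fps_const (ux m) * Bf (-1) (v $ m))"
  defines "Fx \<equiv> fps_const a * fps_X * F * S2"
  defines "P \<equiv> (\<Prod>j\<in>UNIV. p + v $ j)"
  defines "PP \<equiv> (\<lambda>i. \<Prod>j\<in>UNIV - {i}. p + v $ j)"
  shows "p * (ev n g p * (\<Sum>m\<in>UNIV. ux m * PP m) - ev (Suc n) Fx p * ((\<Sum>i\<in>UNIV. PP i) - real M * P / p))
       = (\<Sum>i\<in>UNIV. v $ i * ((Fx * Bf (-1) (v $ i)) $$ n - ux i * (g * Bf (-1) (v $ i)) $$ (n - 1)) * PP i)"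
proof -
  obtain n' where nn: "n = Suc n'" using n1 by (cases n) auto
  define B where "B = (\<lambda>m. Bf (-1) (v $ m))"
  define H where "H = fps_const a * F * S2"
  have FxH: "Fx = fps_X * H" by (simp add: Fx_def H_def algebra_simps)
  define A where "A = ev n g p"
  define a' where "a' = ev (Suc n) Fx p"
  define Q where "Q = (\<lambda>m. ev n' (g * B m) p)"
  define r where "r = (\<lambda>m. (g * B m) $$ n')"
  define R where "R = (\<lambda>m. ev n (Fx * B m) p)"
  define t where "t = (\<lambda>m. (Fx * B m) $$ n)"
  have PPm: "P = (p + v $ m) * PP m" for m
    unfolding P_def PP_def by (rule prod.remove) auto
  have divg: "A = (p + v $ m) * Q m + r m" for m
  proof -
    have e: "g * B m * (1 + fps_const (v $ m) * fps_X) = g"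
      by (simp add: B_def mult.assoc Bf_m1)
    have "ev (Suc n') g p = (p + v $ m) * ev n' (g * B m) p + (g * B m) $$ n'"
      using ev_div[of n' "g * B m" "v $ m" p] unfolding e .
    then show ?thesis by (simp add: A_def Q_def r_def nn)
  qed
  have diva: "a' = (p + v $ m) * R m + t m" for m
  proof -
    have e: "Fx * B m * (1 + fps_const (v $ m) * fps_X) = Fx"
      by (simp add: B_def mult.assoc Bf_m1)
    have "ev (Suc n) Fx p = (p + v $ m) * ev n (Fx * B m) p + (Fx * B m) $$ n"
      using ev_div[of n "Fx * B m" "v $ m" p] unfolding e .
    then show ?thesis by (simp add: a'_def R_def t_def)
  qed
  have termw: "ux m * A * (p * PP m) - a' * (p * PP m)
      = P * (ux m * A - ux m * v $ m * Q m + v $ m * R m) - a' * P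
        + (v $ m * t m - ux m * v $ m * r m) * PP m" for m
  proof -
    have pp: "p * PP m = P - v $ m * PP m" using PPm[of m] by (simp add: algebra_simps)
    have h1: "A * PP m = Q m * P + r m * PP m" unfolding divg[of m] PPm[of m] by (simp add: algebra_simps)
    have h2: "a' * PP m = R m * P + t m * PP m" unfolding diva[of m] PPm[of m] by (simp add: algebra_simps)
    have "ux m * A * (p * PP m) - a' * (p * PP m) = ux m * A * P - ux m * v $ m * (A * PP m) - a' * P + v $ m * (a' * PP m)"
      unfolding pp by (simp add: algebra_simps)
    also have "\<dots> = P * (ux m * A - ux m * v $ m * Q m + v $ m * R m) - a' * P
        + (v $ m * t m - ux m * v $ m * r m) * PP m"
      unfolding h1 h2 by (simp add: algebra_simps)
    finally show ?thesis .
  qed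
  have W: "(\<Sum>m\<in>UNIV. ux m * A - ux m * v $ m * Q m + v $ m * R m) - k * a' = 0"
  proof -
    have "(\<Sum>m\<in>UNIV. ux m * A - ux m * v $ m * Q m + v $ m * R m) - k * a'
      = ev n ((\<Sum>m\<in>UNIV. fps_const (ux m) * g - fps_const (ux m * v $ m) * (fps_X * (g * Bf (-1) (v $ m)))
          + fps_const (v $ m) * (fps_X * H * Bf (-1) (v $ m))) - fps_const k * H) p"
      unfolding ev_diff ev_sum ev_add ev_cmult
      by (simp add: A_def Q_def R_def a'_def B_def nn ev_X FxH mult.assoc)
    also have "\<dots> = 0"
      using Y_zero[OF ka, where v=v and ux=ux] by (simp add: F_def g_def S2_def H_def ev_zero)
    finally show ?thesis .
  qed
  have "p * (A * (\<Sum>m\<in>UNIV. ux m * PP m) - a' * ((\<Sum>i\<in>UNIV. PP i) - real M * P / p))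
      = (\<Sum>m\<in>UNIV. ux m * A * (p * PP m) - a' * (p * PP m)) + real M * a' * P"
    using p0 by (simp add: sum_distrib_left sum_subtractf algebra_simps)
  also have "\<dots> = P * ((\<Sum>m\<in>UNIV. ux m * A - ux m * v $ m * Q m + v $ m * R m) - k * a')
      + (\<Sum>m\<in>UNIV. (v $ m * t m - ux m * v $ m * r m) * PP m)"
  proof -
    have "(\<Sum>m\<in>UNIV. P * (ux m * A - ux m * v $ m * Q m + v $ m * R m) - a' * P
        + (v $ m * t m - ux m * v $ m * r m) * PP m)
      = P * (\<Sum>m\<in>UNIV. ux m * A - ux m * v $ m * Q m + v $ m * R m) - real CARD('N) * a' * P
        + (\<Sum>m\<in>UNIV. (v $ m * t m - ux m * v $ m * r m) * PP m)"
      by (simp only: sum.distrib sum_subtractf sum_distrib_left[symmetric] sum_constant) simp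
    then show ?thesis unfolding termw kdef by (simp add: algebra_simps)
  qed
  also have "\<dots> = (\<Sum>m\<in>UNIV. (v $ m * t m - ux m * v $ m * r m) * PP m)"
    using W by simp
  finally show ?thesis
    by (simp add: A_def a'_def t_def r_def B_def nn algebra_simps)
qed

lemma comp_deriv:
  fixes f :: "real \<Rightarrow> real^'N"
  assumes "f differentiable (at x)"
  shows "((\<lambda>y. f y $ i) has_real_derivative (vector_derivative f (at x)) $ i) (at x)"
proof -
  have "(f has_vector_derivative vector_derivative f (at x)) (at x)"
    using assms vector_derivative_works by blast
  then have "(f has_derivative (\<lambda>h. h *\<^sub>R vector_derivative f (at x))) (at x)"
    by (simp add: has_vector_derivative_def)
  then have "((\<lambda>y. f y $ i) has_derivative (\<lambda>h. (h *\<^sub>R vector_derivative f (at x)) $ i)) (at x)"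
    by (rule bounded_linear.has_derivative[OF bounded_linear_vec_nth])
  moreover have "(\<lambda>h. (h *\<^sub>R vector_derivative f (at x)) $ i) = (*) ((vector_derivative f (at x)) $ i)"
    by (auto simp: mult.commute)
  ultimately show ?thesis by (simp add: has_field_derivative_def)
qed

lemma DERIV_prod_gen:
  fixes f :: "'i \<Rightarrow> real \<Rightarrow> real"
  assumes "finite I" "\<And>i. i \<in> I \<Longrightarrow> (f i has_real_derivative D i) (at x)"
  shows "((\<lambda>y. \<Prod>i\<in>I. f i y) has_real_derivative (\<Sum>m\<in>I. D m * (\<Prod>i\<in>I - {m}. f i x))) (at x)"
  using assms
proof (induction I rule: finite_induct)
  case empty then show ?case by simp
next
  case (insert a I)
  have e: "\<And>m. m \<in> I \<Longrightarrow> insert a I - {m} = insert a (I - {m})" using insert by auto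
  have h: "((\<lambda>y. f a y * (\<Prod>i\<in>I. f i y)) has_real_derivative
      D a * (\<Prod>i\<in>I. f i x) + (\<Sum>m\<in>I. D m * (\<Prod>i\<in>I - {m}. f i x)) * f a x) (at x)"
    using insert by (intro DERIV_mult) auto
  have "D a * (\<Prod>i\<in>I. f i x) + (\<Sum>m\<in>I. D m * (\<Prod>i\<in>I - {m}. f i x)) * f a x
      = (\<Sum>m\<in>insert a I. D m * (\<Prod>i\<in>insert a I - {m}. f i x))"
  proof -
    have "(\<Sum>m\<in>I. D m * (\<Prod>i\<in>I - {m}. f i x)) * f a x = (\<Sum>m\<in>I. D m * (f a x * (\<Prod>i\<in>I - {m}. f i x)))"
      by (simp only: sum_distrib_right) (simp add: mult_ac)
    also have "\<dots> = (\<Sum>m\<in>I. D m * (\<Prod>i\<in>insert a I - {m}. f i x))"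
      by (rule sum.cong) (use insert in \<open>simp_all add: e\<close>)
    finally have "(\<Sum>m\<in>I. D m * (\<Prod>i\<in>I - {m}. f i x)) * f a x = (\<Sum>m\<in>I. D m * (\<Prod>i\<in>insert a I - {m}. f i x))" .
    then show ?thesis using insert by (simp add: insert_Diff_if)
  qed
  then show ?case using h insert by simp
qed

lemma ev_deriv_q:
  "((\<lambda>q. ev (Suc n) F q) has_real_derivative ev n (fps_const (real n) * F - fps_X * fps_deriv F) q) (at q)"
proof -
  have d: "((\<lambda>q. \<Sum>s<Suc n. F $$ s * q ^ (n - s)) has_real_derivative
      (\<Sum>s<Suc n. F $$ s * (real (n - s) * q ^ (n - s - Suc 0)))) (at q)"
    by (intro DERIV_sum DERIV_cmult DERIV_pow)
  have "(\<Sum>s<Suc n. F $$ s * (real (n - s) * q ^ (n - s - Suc 0)))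
      = (\<Sum>s<n. F $$ s * (real (n - s) * q ^ (n - s - Suc 0)))"
    by simp
  also have "\<dots> = ev n (fps_const (real n) * F - fps_X * fps_deriv F) q"
    unfolding ev_def
  proof (rule sum.cong)
    fix s assume "s \<in> {..<n}"
    then have sn: "s < n" by simp
    have "(fps_const (real n) * F - fps_X * fps_deriv F) $$ s = (real n - real s) * F $$ s"
      by (cases s) (auto simp: algebra_simps)
    then show "F $$ s * (real (n - s) * q ^ (n - s - Suc 0)) =
        (fps_const (real n) * F - fps_X * fps_deriv F) $$ s * q ^ (n - 1 - s)"
      using sn by (simp add: of_nat_diff)
  qed simp
  finally show ?thesis using d by (simp add: ev_def)
qed

lemma ev_deriv_fhd:
  assumes "fhd f D x"
  shows "((\<lambda>y. ev d (f y) p) has_real_derivative ev d D p) (at x)"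
  unfolding ev_def using assms unfolding fhd_def
  by (intro DERIV_sum) (auto intro!: DERIV_cmult_right)

lemma Lpow_plus_ev:
  assumes "M < CARD('N::finite)"
  shows "Lpow_plus M n (v::real^'N) q = ev (Suc n) (Fv (alpha CARD('N) M n) v) q"
  unfolding Lpow_plus_def ev_def Lpow_coeff_eq[OF assms]
  by (rule sum.cong) auto

lemma Lax_dt:
  fixes w :: "real \<Rightarrow> real^'N"
  assumes "\<And>i. ((\<lambda>t. w t $ i) has_real_derivative w' i) (at t0)"
  shows "((\<lambda>t. Lax M (w t) p) has_real_derivative
      inverse (p ^ M) * (\<Sum>m\<in>UNIV. w' m * (\<Prod>j\<in>UNIV - {m}. p + w t0 $ j))) (at t0)"
proof -
  have "((\<lambda>t. \<Prod>i\<in>UNIV. p + w t $ i) has_real_derivative (\<Sum>m\<in>UNIV. w' m * (\<Prod>j\<in>UNIV - {m}. p + w t0 $ j))) (at t0)"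
    by (rule DERIV_prod_gen) (auto intro!: derivative_eq_intros assms)
  then show ?thesis unfolding Lax_def by (rule DERIV_cmult)
qed

lemma Lax_dq:
  fixes v :: "real^'N"
  assumes p0: "p \<noteq> 0"
  shows "((\<lambda>q. Lax M v q) has_real_derivative
      inverse (p ^ M) * ((\<Sum>i\<in>UNIV. \<Prod>j\<in>UNIV - {i}. p + v $ j) - real M * (\<Prod>j\<in>UNIV. p + v $ j) / p)) (at p)"
proof -
  have dP: "((\<lambda>q. \<Prod>i\<in>UNIV. q + v $ i) has_real_derivative (\<Sum>m\<in>UNIV. 1 * (\<Prod>j\<in>UNIV - {m}. p + v $ j))) (at p)"
    by (rule DERIV_prod_gen) (auto intro!: derivative_eq_intros)
  have dI: "((\<lambda>q. inverse (q ^ M)) has_real_derivative - (real M * p ^ (M - 1) * inverse ((p ^ M)\<^sup>2))) (at p)"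
  proof -
    have "((\<lambda>q. inverse (q ^ M)) has_real_derivative - (real M * p ^ (M - Suc 0) * inverse ((p ^ M)\<^sup>2))) (at p)"
      using DERIV_inverse_fun[OF DERIV_pow[of M p], of UNIV] p0 by (simp add: power2_eq_square)
    then show ?thesis by simp
  qed
  have aux: "real M * p ^ (M - 1) = real M * p ^ M / p"
    using p0 by (cases M) auto
  have "((\<lambda>q. inverse (q ^ M) * (\<Prod>i\<in>UNIV. q + v $ i)) has_real_derivative
      - (real M * p ^ (M - 1) * inverse ((p ^ M)\<^sup>2)) * (\<Prod>i\<in>UNIV. p + v $ i)
      + (\<Sum>m\<in>UNIV. 1 * (\<Prod>j\<in>UNIV - {m}. p + v $ j)) * inverse (p ^ M)) (at p)"
    by (rule DERIV_mult[OF dI dP])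
  moreover have "- (real M * p ^ (M - 1) * inverse ((p ^ M)\<^sup>2)) * (\<Prod>i\<in>UNIV. p + v $ i)
      + (\<Sum>m\<in>UNIV. 1 * (\<Prod>j\<in>UNIV - {m}. p + v $ j)) * inverse (p ^ M)
      = inverse (p ^ M) * ((\<Sum>i\<in>UNIV. \<Prod>j\<in>UNIV - {i}. p + v $ j) - real M * (\<Prod>j\<in>UNIV. p + v $ j) / p)"
    unfolding aux using p0 by (simp add: power2_eq_square field_simps)
  ultimately show ?thesis unfolding Lax_def by simp
qed

lemma sum_delta_fps: "(\<Sum>m\<in>UNIV. fps_const (if m = j then 1 else 0) * (B m :: real fps)) = B (j::'a::finite)"
proof -
  have "(\<Sum>m\<in>UNIV. fps_const (if m = j then 1 else 0) * B m) = (\<Sum>m\<in>UNIV. if m = j then B m else 0)"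
    by (rule sum.cong) auto
  then show ?thesis by simp
qed

lemma pd_Qdens:
  fixes w0 :: "real^'N"
  shows "pd (\<lambda>w. c * Qdens M n w) j w0 =
     c * (alpha CARD('N) M n * (fps_X * Fv (alpha CARD('N) M n) w0 * Bf (-1) (w0 $ j)) $$ n)"
proof -
  let ?a = "alpha CARD('N) M n"
  let ?w = "\<lambda>t. w0 + t *\<^sub>R axis j 1"
  have dw: "((\<lambda>t. ?w t $ i) has_real_derivative (if i = j then 1 else 0)) (at 0)" for i
    by (cases "i = j") (auto simp: axis_def intro!: derivative_eq_intros)
  have "fhd (\<lambda>t. Fv ?a (?w t)) (fps_const ?a * fps_X * Fv ?a (?w 0) * (\<Sum>m\<in>UNIV. fps_const (if m = j then 1 else 0) * Bf (-1) (?w 0 $ m))) 0"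
    by (rule Fv_fhd) (rule dw)
  then have "fhd (\<lambda>t. Fv ?a (?w t)) (fps_const ?a * (fps_X * Fv ?a w0 * Bf (-1) (w0 $ j))) 0"
    by (simp add: sum_delta_fps[where B = "\<lambda>m. Bf (-1) (w0 $ m)"] mult.assoc)
  then have "((\<lambda>t. Fv ?a (?w t) $$ n) has_real_derivative ?a * (fps_X * Fv ?a w0 * Bf (-1) (w0 $ j)) $$ n) (at 0)"
    unfolding fhd_def by simp
  then have "((\<lambda>t. c * Qdens M n (?w t)) has_real_derivative c * (?a * (fps_X * Fv ?a w0 * Bf (-1) (w0 $ j)) $$ n)) (at 0)"
    unfolding Qdens_eq by (rule DERIV_cmult)
  then show ?thesis unfolding pd_def by (rule DERIV_imp_deriv)
qed

lemma Chr_up_eq: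
  fixes v :: "real^'N"
  assumes M0: "0 < M" and MN: "M < CARD('N)" and nz: "\<forall>i. v $ i \<noteq> 0"
  shows "Chr_up M i j k v = gup M v $ i $ j * (if j = k then 1 / v $ j else 0)"
proof -
  have "(\<Sum>s\<in>UNIV. gup M v $ i $ s * Chr M j s k v) = (\<Sum>s\<in>UNIV. if s = j then (if j = k then gup M v $ i $ j * (- 1 / v $ j) else 0) else 0)"
    unfolding Chr_eq[OF assms] by (rule sum.cong) auto
  then show ?thesis unfolding Chr_up_def by simp
qed

lemma coef_id:
  assumes n1: "1 \<le> n"
  shows "(F * Bf (-2) c) $$ (n - 1) = ((fps_const (real n) * F - fps_X * fps_deriv F) * Bf (-1) c) $$ (n - 1)"
  unfolding fps_mult_nth
proof (rule sum.cong)
  fix i assume "i \<in> {0..n - 1}"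
  then have i: "i \<le> n - 1" by simp
  have g: "(fps_const (real n) * F - fps_X * fps_deriv F) $$ i = (real n - real i) * F $$ i"
    by (cases i) (auto simp: algebra_simps)
  have r: "real (n - 1 - i) + 1 = real n - real i" using i n1 by (simp add: of_nat_diff)
  show "F $$ i * Bf (-2) c $$ (n - 1 - i) = (fps_const (real n) * F - fps_X * fps_deriv F) $$ i * Bf (-1) c $$ (n - 1 - i)"
    unfolding g Bf_nth gch_m2 gch_m1 r[symmetric] by (simp add: algebra_simps)
qed simp

lemma EUL:
  fixes w :: "real^'N"
  assumes ka: "k * a = real n" and a0: "a \<noteq> 0"
  shows "(\<Sum>j\<in>UNIV. (if i = j then 1 - k else 1) * w $ j * (fps_X * Fv a w * Bf (-1) (w $ j)) $$ n)
       = k * (Fv a w * Bf (-1) (w $ i)) $$ n"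
proof -
  let ?F = "Fv a w"
  let ?S1 = "\<Sum>m\<in>UNIV. fps_const (w $ m) * Bf (-1) (w $ m)"
  let ?X = "\<lambda>j. w $ j * (fps_X * ?F * Bf (-1) (w $ j)) $$ n"
  have s: "(\<Sum>j\<in>UNIV. ?X j) = (fps_X * ?F * ?S1) $$ n"
  proof -
    have "fps_X * ?F * ?S1 = (\<Sum>j\<in>UNIV. fps_const (w $ j) * (fps_X * ?F * Bf (-1) (w $ j)))"
      by (simp add: sum_distrib_left mult_ac)
    then show ?thesis by (simp add: fps_sum_nth)
  qed
  have "(fps_X * fps_deriv ?F) $$ n = real n * ?F $$ n"
    by (cases n) auto
  then have "a * (fps_X * ?F * ?S1) $$ n = real n * ?F $$ n"
    unfolding Fv_euler by (simp add: mult.assoc)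
  then have s2: "(\<Sum>j\<in>UNIV. ?X j) = k * ?F $$ n"
    using a0 unfolding s ka[symmetric] by (simp add: field_simps)
  have "(\<Sum>j\<in>UNIV. (if i = j then 1 - k else 1) * w $ j * (fps_X * ?F * Bf (-1) (w $ j)) $$ n)
      = (\<Sum>j\<in>UNIV. ?X j - (if j = i then k * ?X i else 0))"
    by (rule sum.cong) (auto simp: algebra_simps)
  also have "\<dots> = k * ?F $$ n - k * ?X i"
    by (simp add: sum_subtractf s2)
  also have "\<dots> = k * (?F * (1 - fps_const (w $ i) * fps_X * Bf (-1) (w $ i))) $$ n"
  proof -
    have "?F * (1 - fps_const (w $ i) * fps_X * Bf (-1) (w $ i)) = ?F - fps_const (w $ i) * (fps_X * ?F * Bf (-1) (w $ i))"
      by (simp add: algebra_simps)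
    then show ?thesis by (simp only: fps_sub_nth fps_mult_left_const_nth right_diff_distrib)
  qed
  also have "\<dots> = k * (?F * Bf (-1) (w $ i)) $$ n"
    using Bm1_eq[of "w $ i"] by simp
  finally show ?thesis .
qed

lemma LaxE:
  fixes u :: "real \<Rightarrow> real \<Rightarrow> real^'N"
  assumes M0: "0 < M" and MN: "M < CARD('N)" and n1: "1 \<le> n"
    and dx: "\<And>i. ((\<lambda>y. u y tau $ i) has_real_derivative ux i) (at x)"
    and dt: "\<And>i. ((\<lambda>t. u x t $ i) has_real_derivative ut i) (at tau)"
  defines "a \<equiv> alpha CARD('N) M n"
  defines "F \<equiv> Fv a (u x tau)"
  defines "g \<equiv> fps_const (real n) * F - fps_X * fps_deriv F"
  defines "Fx \<equiv> fps_const a * fps_X * F * (\<Sum>m\<in>UNIV. fps_const (ux m) * Bf (-1) (u x tau $ m))"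
  defines "PP \<equiv> (\<lambda>p i. \<Prod>j\<in>UNIV - {i}. p + u x tau $ j)"
  defines "vv \<equiv> (\<lambda>i. u x tau $ i * ((Fx * Bf (-1) (u x tau $ i)) $$ n - ux i * (g * Bf (-1) (u x tau $ i)) $$ (n - 1)))"
  shows "Lax_eq_at M n u x tau \<longleftrightarrow> (\<forall>p. p \<noteq> 0 \<longrightarrow> (\<Sum>i\<in>UNIV. ut i * PP p i) = (\<Sum>i\<in>UNIV. vv i * PP p i))"
proof -
  define v where "v = u x tau"
  define k where "k = real CARD('N) - real M"
  have k0: "k > 0" using MN by (simp add: k_def)
  have ka: "k * a = real n" using k0 by (simp add: a_def alpha_def k_def)
  have fhdF: "fhd (\<lambda>y. Fv a (u y tau)) Fx x"
    unfolding Fx_def F_def by (rule Fv_fhd) (rule dx)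
  have eq: "(deriv (\<lambda>t. Lax M (u x t) p) tau =
       p * (deriv (\<lambda>q. Lpow_plus M n (u x tau) q) p * deriv (\<lambda>y. Lax M (u y tau) p) x
          - deriv (\<lambda>y. Lpow_plus M n (u y tau) p) x * deriv (\<lambda>q. Lax M (u x tau) q) p))
      \<longleftrightarrow> (\<Sum>i\<in>UNIV. ut i * PP p i) = (\<Sum>i\<in>UNIV. vv i * PP p i)" if p0: "p \<noteq> 0" for p
  proof -
    have d1: "deriv (\<lambda>t. Lax M (u x t) p) tau = inverse (p ^ M) * (\<Sum>m\<in>UNIV. ut m * PP p m)"
      unfolding PP_def by (rule DERIV_imp_deriv, rule Lax_dt, rule dt)
    have d3: "deriv (\<lambda>y. Lax M (u y tau) p) x = inverse (p ^ M) * (\<Sum>m\<in>UNIV. ux m * PP p m)"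
      unfolding PP_def by (rule DERIV_imp_deriv, rule Lax_dt, rule dx)
    have d2: "deriv (\<lambda>q. Lpow_plus M n (u x tau) q) p = ev n g p"
    proof -
      have "(\<lambda>q. Lpow_plus M n (u x tau) q) = (\<lambda>q. ev (Suc n) F q)"
        by (simp add: Lpow_plus_ev[OF MN] F_def a_def)
      then show ?thesis unfolding g_def by (simp add: DERIV_imp_deriv[OF ev_deriv_q])
    qed
    have d4: "deriv (\<lambda>y. Lpow_plus M n (u y tau) p) x = ev (Suc n) Fx p"
    proof -
      have "(\<lambda>y. Lpow_plus M n (u y tau) p) = (\<lambda>y. ev (Suc n) (Fv a (u y tau)) p)"
        by (simp add: Lpow_plus_ev[OF MN] a_def)
      then show ?thesis by (simp add: DERIV_imp_deriv[OF ev_deriv_fhd[OF fhdF]])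
    qed
    have d5: "deriv (\<lambda>q. Lax M (u x tau) q) p =
        inverse (p ^ M) * ((\<Sum>i\<in>UNIV. PP p i) - real M * (\<Prod>j\<in>UNIV. p + u x tau $ j) / p)"
      unfolding PP_def by (rule DERIV_imp_deriv, rule Lax_dq[OF p0])
    have kl: "p * (ev n g p * (\<Sum>m\<in>UNIV. ux m * PP p m) - ev (Suc n) Fx p * ((\<Sum>i\<in>UNIV. PP p i) - real M * (\<Prod>j\<in>UNIV. p + u x tau $ j) / p))
       = (\<Sum>i\<in>UNIV. vv i * PP p i)"
      unfolding g_def Fx_def F_def PP_def vv_def
      by (rule KL[OF n1 ka p0 k_def])
    have ip: "inverse (p ^ M) \<noteq> 0" using p0 by simp
    have "p * (ev n g p * (inverse (p ^ M) * (\<Sum>m\<in>UNIV. ux m * PP p m))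
          - ev (Suc n) Fx p * (inverse (p ^ M) * ((\<Sum>i\<in>UNIV. PP p i) - real M * (\<Prod>j\<in>UNIV. p + u x tau $ j) / p)))
        = inverse (p ^ M) * (\<Sum>i\<in>UNIV. vv i * PP p i)"
      unfolding kl[symmetric] by (simp add: algebra_simps)
    then show ?thesis unfolding d1 d2 d3 d4 d5 using ip p0 by simp
  qed
  show ?thesis unfolding Lax_eq_at_def using eq by blast
qed

lemma HamE:
  fixes u :: "real \<Rightarrow> real \<Rightarrow> real^'N"
  assumes M0: "0 < M" and MN: "M < CARD('N)" and n1: "1 \<le> n"
    and nz: "\<forall>i. u x tau $ i \<noteq> 0"
    and dx: "\<And>i. ((\<lambda>y. u y tau $ i) has_real_derivative ux i) (at x)"
    and dt: "\<And>i. ((\<lambda>t. u x t $ i) has_real_derivative ut i) (at tau)"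
  defines "a \<equiv> alpha CARD('N) M n"
  defines "F \<equiv> Fv a (u x tau)"
  defines "g \<equiv> fps_const (real n) * F - fps_X * fps_deriv F"
  defines "Fx \<equiv> fps_const a * fps_X * F * (\<Sum>m\<in>UNIV. fps_const (ux m) * Bf (-1) (u x tau $ m))"
  defines "vv \<equiv> (\<lambda>i. u x tau $ i * ((Fx * Bf (-1) (u x tau $ i)) $$ n - ux i * (g * Bf (-1) (u x tau $ i)) $$ (n - 1)))"
  shows "Ham_eq_at M (\<lambda>v. (1 / real n) * Qdens M n v) u x tau \<longleftrightarrow> (\<forall>i. ut i = vv i)"
proof -
  define v where "v = u x tau"
  define k where "k = real CARD('N) - real M"
  define h where "h = (\<lambda>v::real^'N. (1 / real n) * Qdens M n v)"
  define c where "c = 1 / real n"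
  have k0: "k > 0" using MN by (simp add: k_def)
  have ka: "k * a = real n" using k0 by (simp add: a_def alpha_def k_def)
  have a0: "a \<noteq> 0" using ka n1 by auto
  have fhdF: "fhd (\<lambda>y. Fv a (u y tau)) Fx x"
    unfolding Fx_def F_def by (rule Fv_fhd) (rule dx)
  define Psi where "Psi = (\<lambda>j (w::real^'N). (fps_X * Fv a w * Bf (-1) (w $ j)) $$ n)"
  define Phi where "Phi = (\<lambda>i (w::real^'N). (Fv a w * Bf (-1) (w $ i)) $$ n)"
  define Bx where "Bx = (\<lambda>j. fps_const (-1 * ux j) * fps_X * Bf (-1 - 1) (v $ j))"
  have fhdB: "fhd (\<lambda>y. Bf (-1) (u y tau $ j)) (Bx j) x" for j
    unfolding Bx_def v_def by (rule fhd_Bf) (rule dx)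
  have pdh: "pd h j w = c * (a * Psi j w)" for j w
    unfolding h_def pd_Qdens c_def Psi_def a_def by simp
  define Psi' where "Psi' = (\<lambda>j. ((0 * F + fps_X * Fx) * Bf (-1) (v $ j) + (fps_X * F) * Bx j) $$ n)"
  have dPsi: "((\<lambda>y. Psi j (u y tau)) has_real_derivative Psi' j) (at x)" for j
  proof -
    have "fhd (\<lambda>y. fps_X * Fv a (u y tau)) (0 * Fv a (u x tau) + fps_X * Fx) x"
      by (rule fhd_mult[OF fhd_const fhdF])
    then have "fhd (\<lambda>y. fps_X * Fv a (u y tau) * Bf (-1) (u y tau $ j))
        ((0 * Fv a (u x tau) + fps_X * Fx) * Bf (-1) (u x tau $ j) + (fps_X * Fv a (u x tau)) * Bx j) x"
      by (rule fhd_mult[OF _ fhdB])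
    then show ?thesis unfolding fhd_def Psi_def Psi'_def F_def v_def by blast
  qed
  define DPhi where "DPhi = (\<lambda>i. (Fx * Bf (-1) (v $ i) + F * Bx i) $$ n)"
  have dPhi: "((\<lambda>y. Phi i (u y tau)) has_real_derivative DPhi i) (at x)" for i
  proof -
    have "fhd (\<lambda>y. Fv a (u y tau) * Bf (-1) (u y tau $ i)) (Fx * Bf (-1) (u x tau $ i) + Fv a (u x tau) * Bx i) x"
      by (rule fhd_mult[OF fhdF fhdB])
    then show ?thesis unfolding fhd_def Phi_def DPhi_def F_def v_def by blast
  qed
  define G where "G = (\<lambda>i j::'N. if i = j then 1 - k else (1::real))"
  have key: "(\<Sum>j\<in>UNIV. G i j * (ux j * Psi j v + Psi' j * v $ j)) = k * DPhi i" for i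
  proof -
    have d1: "((\<lambda>y. \<Sum>j\<in>UNIV. G i j * (u y tau $ j * Psi j (u y tau))) has_real_derivative
        (\<Sum>j\<in>UNIV. G i j * (ux j * Psi j v + Psi' j * v $ j))) (at x)"
      unfolding v_def by (intro DERIV_sum DERIV_cmult DERIV_mult dx dPsi)
    have fe: "(\<lambda>y. \<Sum>j\<in>UNIV. G i j * (u y tau $ j * Psi j (u y tau))) = (\<lambda>y. k * Phi i (u y tau))"
    proof
      fix y
      show "(\<Sum>j\<in>UNIV. G i j * (u y tau $ j * Psi j (u y tau))) = k * Phi i (u y tau)"
        using EUL[OF ka a0, of i "u y tau"] unfolding G_def Psi_def Phi_def by (simp add: mult.assoc)
    qed
    have d2: "((\<lambda>y. k * Phi i (u y tau)) has_real_derivative k * DPhi i) (at x)"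
      by (intro DERIV_cmult dPhi)
    show ?thesis using DERIV_unique[OF d1[unfolded fe] d2] .
  qed
  have DPhi_eq: "DPhi i = (Fx * Bf (-1) (v $ i)) $$ n - ux i * (g * Bf (-1) (v $ i)) $$ (n - 1)" for i
  proof -
    obtain n' where nn: "n = Suc n'" using n1 by (cases n) auto
    have "(F * Bx i) $$ n = - ux i * (F * Bf (-2) (v $ i)) $$ (n - 1)"
    proof -
      have e: "F * Bx i = fps_const (- ux i) * (fps_X * (F * Bf (-2) (v $ i)))"
        unfolding Bx_def by (simp add: algebra_simps)
      show ?thesis unfolding e by (simp add: nn)
    qed
    then show ?thesis unfolding DPhi_def coef_id[OF n1, of F] g_def by simp
  qed
  have chr: "(\<Sum>k\<in>UNIV. Chr_up M i j k v * deriv (\<lambda>y. u y tau $ k) x * pd h j v)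
      = gup M v $ i $ j * (ux j / v $ j) * pd h j v" for i j
  proof -
    have "(\<Sum>k\<in>UNIV. Chr_up M i j k v * deriv (\<lambda>y. u y tau $ k) x * pd h j v)
        = (\<Sum>k\<in>UNIV. if k = j then gup M v $ i $ j * (ux j / v $ j) * pd h j v else 0)"
      by (rule sum.cong) (auto simp: Chr_up_eq[OF M0 MN nz[folded v_def]] DERIV_imp_deriv[OF dx])
    then show ?thesis by simp
  qed
  have rhs: "(\<Sum>j\<in>UNIV. gup M v $ i $ j * deriv (\<lambda>y. pd h j (u y tau)) x)
       + (\<Sum>j\<in>UNIV. \<Sum>k\<in>UNIV. Chr_up M i j k v * deriv (\<lambda>y. u y tau $ k) x * pd h j v) = vv i" for i
  proof -
    have dd: "deriv (\<lambda>y. pd h j (u y tau)) x = c * (a * Psi' j)" for j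
      unfolding pdh by (intro DERIV_imp_deriv DERIV_cmult dPsi)
    have "(\<Sum>j\<in>UNIV. gup M v $ i $ j * deriv (\<lambda>y. pd h j (u y tau)) x)
       + (\<Sum>j\<in>UNIV. \<Sum>k\<in>UNIV. Chr_up M i j k v * deriv (\<lambda>y. u y tau $ k) x * pd h j v)
       = (\<Sum>j\<in>UNIV. c * a * v $ i * (G i j * (ux j * Psi j v + Psi' j * v $ j)))"
      unfolding chr dd sum.distrib[symmetric]
    proof (rule sum.cong)
      fix j
      have "v $ j \<noteq> 0" using nz by (simp add: v_def)
      then show "gup M v $ i $ j * (c * (a * Psi' j)) + gup M v $ i $ j * (ux j / v $ j) * pd h j v =
          c * a * v $ i * (G i j * (ux j * Psi j v + Psi' j * v $ j))"
        unfolding gup_nth pdh G_def k_def by (simp add: field_simps)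
    qed simp
    also have "\<dots> = c * a * v $ i * (k * DPhi i)"
      unfolding key[symmetric] by (simp add: sum_distrib_left)
    also have "\<dots> = (c * (k * a)) * (v $ i * DPhi i)"
      by (simp only: mult_ac)
    also have "c * (k * a) = 1" using ka n1 by (simp add: c_def)
    also have "1 * (v $ i * DPhi i) = vv i"
      unfolding DPhi_eq vv_def v_def by simp
    finally show ?thesis .
  qed
  show ?thesis
    unfolding Ham_eq_at_def h_def[symmetric] v_def[symmetric] rhs DERIV_imp_deriv[OF dt] by simp
qed

lemma interp:
  fixes ut vv :: "'N::finite \<Rightarrow> real" and v :: "real^'N"
  assumes nz0: "\<forall>i. v $ i \<noteq> 0" and dist: "\<forall>i j. i \<noteq> j \<longrightarrow> v $ i \<noteq> v $ j"
    and h: "\<forall>p. p \<noteq> 0 \<longrightarrow> (\<Sum>i\<in>UNIV. ut i * (\<Prod>j\<in>UNIV - {i}. p + v $ j)) = (\<Sum>i\<in>UNIV. vv i * (\<Prod>j\<in>UNIV - {i}. p + v $ j))"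
  shows "\<forall>i. ut i = vv i"
proof
  fix i
  define p where "p = - (v $ i)"
  have p0: "p \<noteq> 0" using nz0 by (simp add: p_def)
  let ?PP = "\<lambda>j. \<Prod>l\<in>UNIV - {j}. p + v $ l"
  have z: "?PP j = 0" if "j \<noteq> i" for j
    using that by (intro prod_zero) (auto simp: p_def)
  have nzi: "?PP i \<noteq> 0"
    using dist by (auto simp: p_def prod_zero_iff)
  have s: "(\<Sum>j\<in>UNIV. f j * ?PP j) = f i * ?PP i" for f :: "'N \<Rightarrow> real"
  proof -
    have "(\<Sum>j\<in>UNIV. f j * ?PP j) = (\<Sum>j\<in>UNIV. if j = i then f i * ?PP i else 0)"
      by (rule sum.cong) (auto simp: z)
    then show ?thesis by simp
  qed
  have "(\<Sum>j\<in>UNIV. ut j * ?PP j) = (\<Sum>j\<in>UNIV. vv j * ?PP j)" using h p0 by blast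
  then show "ut i = vv i" using nzi unfolding s by simp
qed

theorem proposition3:
  fixes M n :: nat
  assumes "0 < M" and "M < CARD('N::finite)" and "1 \<le> n"
  shows
    \<comment> \<open>Q^(n) is the coefficient of p^0 in L^(n/(N-M))\<close>
    "(\<forall>u::real^'N. Qdens M n u = Lpow_coeff M n n u)
     \<comment> \<open>the metric is non-degenerate\<close>
     \<and> (\<forall>u::real^'N. (\<forall>i. u $ i \<noteq> 0) \<longrightarrow> det (gup M u) \<noteq> 0)
     \<comment> \<open>the metric is flat\<close>
     \<and> (\<forall>u::real^'N. (\<forall>i. u $ i \<noteq> 0) \<longrightarrow> (\<forall>i j k l. Riem M i j k l u = 0))
     \<comment> \<open>the n-th flow is Hamiltonian with H = c * int Q^(n) dx\<close>
     \<and> (\<exists>c::real. c \<noteq> 0 \<and>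
          (\<forall>(u::real \<Rightarrow> real \<Rightarrow> real^'N) x tau.
             (\<forall>y t. \<forall>i. u y t $ i \<noteq> 0) \<longrightarrow>
             (\<forall>y t. (\<lambda>y'. u y' t) differentiable (at y) \<and> (\<lambda>t'. u y t') differentiable (at t)) \<longrightarrow>
             (Ham_eq_at M (\<lambda>v. c * Qdens M n v) u x tau \<longrightarrow> Lax_eq_at M n u x tau) \<and>
             ((\<forall>i j. i \<noteq> j \<longrightarrow> u x tau $ i \<noteq> u x tau $ j) \<longrightarrow>
                Lax_eq_at M n u x tau \<longrightarrow> Ham_eq_at M (\<lambda>v. c * Qdens M n v) u x tau)))"
proof -
  have P1: "\<forall>u::real^'N. Qdens M n u = Lpow_coeff M n n u"
    by (simp add: Qdens_eq Lpow_coeff_eq[OF assms(2)])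
  have P2: "\<forall>u::real^'N. (\<forall>i. u $ i \<noteq> 0) \<longrightarrow> det (gup M u) \<noteq> 0"
    using glow_eq(2)[OF assms(1,2)] by blast
  have P3: "\<forall>u::real^'N. (\<forall>i. u $ i \<noteq> 0) \<longrightarrow> (\<forall>i j k l. Riem M i j k l u = 0)"
    using Riem_zero[OF assms(1,2)] by blast
  have P4: "(\<forall>(u::real \<Rightarrow> real \<Rightarrow> real^'N) x tau.
             (\<forall>y t. \<forall>i. u y t $ i \<noteq> 0) \<longrightarrow>
             (\<forall>y t. (\<lambda>y'. u y' t) differentiable (at y) \<and> (\<lambda>t'. u y t') differentiable (at t)) \<longrightarrow>
             (Ham_eq_at M (\<lambda>v. (1 / real n) * Qdens M n v) u x tau \<longrightarrow> Lax_eq_at M n u x tau) \<and>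
             ((\<forall>i j. i \<noteq> j \<longrightarrow> u x tau $ i \<noteq> u x tau $ j) \<longrightarrow>
                Lax_eq_at M n u x tau \<longrightarrow> Ham_eq_at M (\<lambda>v. (1 / real n) * Qdens M n v) u x tau))"
  proof (intro allI impI)
    fix u :: "real \<Rightarrow> real \<Rightarrow> real^'N" and x tau
    assume nz: "\<forall>y t. \<forall>i. u y t $ i \<noteq> 0"
      and diff: "\<forall>y t. (\<lambda>y'. u y' t) differentiable (at y) \<and> (\<lambda>t'. u y t') differentiable (at t)"
    define ux where "ux = (\<lambda>i. vector_derivative (\<lambda>y. u y tau) (at x) $ i)"
    define ut where "ut = (\<lambda>i. vector_derivative (\<lambda>t. u x t) (at tau) $ i)"
    have dx: "((\<lambda>y. u y tau $ i) has_real_derivative ux i) (at x)" for i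
      unfolding ux_def by (rule comp_deriv) (use diff in blast)
    have dt: "((\<lambda>t. u x t $ i) has_real_derivative ut i) (at tau)" for i
      unfolding ut_def by (rule comp_deriv) (use diff in blast)
    have nz0: "\<forall>i. u x tau $ i \<noteq> 0" using nz by blast
    note L = LaxE[OF assms dx dt]
    note Hm = HamE[OF assms nz0 dx dt]
    show "(Ham_eq_at M (\<lambda>v. (1 / real n) * Qdens M n v) u x tau \<longrightarrow> Lax_eq_at M n u x tau) \<and>
        ((\<forall>i j. i \<noteq> j \<longrightarrow> u x tau $ i \<noteq> u x tau $ j) \<longrightarrow>
           Lax_eq_at M n u x tau \<longrightarrow> Ham_eq_at M (\<lambda>v. (1 / real n) * Qdens M n v) u x tau)"
    proof (intro conjI impI)
      assume "Ham_eq_at M (\<lambda>v. (1 / real n) * Qdens M n v) u x tau"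
      then show "Lax_eq_at M n u x tau" unfolding L Hm by simp
    next
      assume dist: "\<forall>i j. i \<noteq> j \<longrightarrow> u x tau $ i \<noteq> u x tau $ j"
        and lx: "Lax_eq_at M n u x tau"
      show "Ham_eq_at M (\<lambda>v. (1 / real n) * Qdens M n v) u x tau"
        unfolding Hm by (rule interp[OF nz0 dist lx[unfolded L]])
    qed
  qed
  show ?thesis
    using P1 P2 P3 P4 assms(3) by (intro conjI exI[of _ "1 / real n"]) auto
qed

thm_deps proposition3

end
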